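(* Let $\mathcal{L}$ be any fragment (set of specifications) of quantifier-free non-linear real arithmetic ($\mathsf{NRA}$) for which there is a sound and complete algorithm $\mathcal{A}_{\mathcal{L}}$ for solving $\mathcal{RPS}$, i.e. an algorithm which, for every specification $\varphi(\mathbf{X},\mathbf{Y})\in\mathcal{L}$, outputs a program of the grammar $\mathcal{G}$ that realizes $\varphi$ over the reals. Then $\mathcal{A}_{\mathcal{L}}$ also solves $\mathcal{RPS}_{\mathbb{Q}}$ for the fragment $\mathcal{L}$, i.e. for every $\varphi\in\mathcal{L}$ the program it outputs realizes $\varphi$ over the rationals. Moreover, there exists a fragment of $\mathsf{NRA}$ for which there does not exist any sound and complete algorithm for solving $\mathcal{RPS}$, but for which there is a sound and complete algorithm for solving $\mathcal{RPS}_{\mathbb{Q}}$.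
   Context: A specification is a quantifier-free $\mathsf{NRA}$ formula $\varphi(\mathbf{X},\mathbf{Y})$: a Boolean combination of polynomial inequalities $p\bowtie 0$, $\bowtie\in\{<,>,\le,\ge\}$, where $p$ is a polynomial with rational coefficients over the input variables $\mathbf{X}=(x_1,\dots,x_m)$ and the output variables $\mathbf{Y}=(y_1,\dots,y_n)$. The grammar $\mathcal{G}$ generates imperative programs built from: assignments $v\leftarrow t$ where $t$ is a polynomial term with rational coefficients over program variables; conditionals "if $C$ then $P$ else $P'$"; loops "while $C$ do $P$", where each condition $C$ is a Boolean combination of polynomial inequalities over program variables; sequential composition; and return statements returning either a tuple of variables or the special symbol $\bot$. Input variables $\mathbf{X}$ are never assigned. For a set $D\in\{\mathbb{R},\mathbb{Q}\}$, a program $\mathsf{Prog}(\mathbf{X})$ realizes $\varphi$ over $D$ if for every $\mathbf{A}\in D^{|\mathbf{X}|}$, running $\mathsf{Prog}$ on $\mathbf{A}$ terminates and returns either $\bot$, in which case $\varphi(\mathbf{A},\mathbf{B})$ is false for all $\mathbf{B}\in D^{|\mathbf{Y}|}$, or a tuple $\mathbf{B}\in D^{|\mathbf{Y}|}$ with $\varphi(\mathbf{A},\mathbf{B})$ true. $\mathcal{RPS}$ (resp. $\mathcal{RPS}_{\mathbb{Q}}$) is the problem of producing, from $\varphi$, a program of $\mathcal{G}$ realizing $\varphi$ over $\mathbb{R}$ (resp. over $\mathbb{Q}$). *)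

theory Defs
  imports Complex_Main
begin

datatype 'v pterm =
    PConst rat
  | PVar 'v
  | PAdd "'v pterm" "'v pterm"
  | PMul "'v pterm" "'v pterm"

primrec peval :: "('v \<Rightarrow> real) \<Rightarrow> 'v pterm \<Rightarrow> real" where
  "peval s (PConst c) = of_rat c"
| "peval s (PVar v) = s v"
| "peval s (PAdd p q) = peval s p + peval s q"
| "peval s (PMul p q) = peval s p * peval s q"

datatype rel = Lt | Gt | Le | Ge

primrec relholds :: "rel \<Rightarrow> real \<Rightarrow> bool" where
  "relholds Lt x = (x < 0)"
| "relholds Gt x = (x > 0)"
| "relholds Le x = (x \<le> 0)"
| "relholds Ge x = (x \<ge> 0)"

datatype 'v fm =
    Atom "'v pterm" rel
  | FNot "'v fm"
  | FAnd "'v fm" "'v fm"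
  | FOr "'v fm" "'v fm"

primrec fholds :: "('v \<Rightarrow> real) \<Rightarrow> 'v fm \<Rightarrow> bool" where
  "fholds s (Atom p r) = relholds r (peval s p)"
| "fholds s (FNot f) = (\<not> fholds s f)"
| "fholds s (FAnd f g) = (fholds s f \<and> fholds s g)"
| "fholds s (FOr f g) = (fholds s f \<or> fholds s g)"

primrec pvars :: "'v pterm \<Rightarrow> 'v set" where
  "pvars (PConst c) = {}"
| "pvars (PVar v) = {v}"
| "pvars (PAdd p q) = pvars p \<union> pvars q"
| "pvars (PMul p q) = pvars p \<union> pvars q"

primrec fvars :: "'v fm \<Rightarrow> 'v set" where
  "fvars (Atom p r) = pvars p"
| "fvars (FNot f) = fvars f"
| "fvars (FAnd f g) = fvars f \<union> fvars g"
| "fvars (FOr f g) = fvars f \<union> fvars g"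

datatype svar = XV nat | YV nat

datatype spec = Spec nat nat "svar fm"

fun spec_wf :: "spec \<Rightarrow> bool" where
  "spec_wf (Spec m n f) =
     (\<forall>v \<in> fvars f. (\<forall>i. v = XV i \<longrightarrow> i < m) \<and> (\<forall>j. v = YV j \<longrightarrow> j < n))"

definition lookup :: "real list \<Rightarrow> nat \<Rightarrow> real" where
  "lookup xs i = (if i < length xs then xs ! i else 0)"

fun senv :: "real list \<Rightarrow> real list \<Rightarrow> svar \<Rightarrow> real" where
  "senv A B (XV i) = lookup A i"
| "senv A B (YV j) = lookup B j"

fun spec_holds :: "spec \<Rightarrow> real list \<Rightarrow> real list \<Rightarrow> bool" where
  "spec_holds (Spec m n f) A B = fholds (senv A B) f"

fun spec_nin :: "spec \<Rightarrow> nat" where "spec_nin (Spec m n f) = m"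
fun spec_nout :: "spec \<Rightarrow> nat" where "spec_nout (Spec m n f) = n"

datatype pvar = PIn nat | PAux nat

datatype prog =
    Assign nat "pvar pterm"          \<comment> \<open>assigns to auxiliary variable PAux v only\<close>
  | If "pvar fm" prog prog
  | While "pvar fm" prog
  | Seq prog prog
  | Return "pvar list"
  | ReturnBot

type_synonym state = "pvar \<Rightarrow> real"

datatype outcome = Cont state | Ret "real list option"

inductive exec :: "prog \<Rightarrow> state \<Rightarrow> outcome \<Rightarrow> bool" where
  Assign: "exec (Assign v t) s (Cont (s(PAux v := peval s t)))"
| IfT: "fholds s c \<Longrightarrow> exec p s out \<Longrightarrow> exec (If c p q) s out"
| IfF: "\<not> fholds s c \<Longrightarrow> exec q s out \<Longrightarrow> exec (If c p q) s out"
| WhileF: "\<not> fholds s c \<Longrightarrow> exec (While c p) s (Cont s)"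
| WhileT: "fholds s c \<Longrightarrow> exec p s (Cont s') \<Longrightarrow> exec (While c p) s' out
            \<Longrightarrow> exec (While c p) s out"
| WhileR: "fholds s c \<Longrightarrow> exec p s (Ret r) \<Longrightarrow> exec (While c p) s (Ret r)"
| SeqC: "exec p s (Cont s') \<Longrightarrow> exec q s' out \<Longrightarrow> exec (Seq p q) s out"
| SeqR: "exec p s (Ret r) \<Longrightarrow> exec (Seq p q) s (Ret r)"
| Return: "exec (Return vs) s (Ret (Some (map s vs)))"
| RetBot: "exec ReturnBot s (Ret None)"

fun init_state :: "real list \<Rightarrow> state" where
  "init_state A (PIn i) = lookup A i"
| "init_state A (PAux j) = 0"

definition realizes :: "real set \<Rightarrow> prog \<Rightarrow> spec \<Rightarrow> bool" where
  "realizes D P \<phi> \<longleftrightarrow>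
     (\<forall>A. length A = spec_nin \<phi> \<and> set A \<subseteq> D \<longrightarrow>
        (\<exists>r. exec P (init_state A) (Ret r) \<and>
           (r = None \<longrightarrow>
              (\<forall>B. length B = spec_nout \<phi> \<and> set B \<subseteq> D \<longrightarrow> \<not> spec_holds \<phi> A B)) \<and>
           (\<forall>B. r = Some B \<longrightarrow>
              length B = spec_nout \<phi> \<and> set B \<subseteq> D \<and> spec_holds \<phi> A B)))"

text \<open>An algorithm (a map from specifications to programs) is sound and complete
  for RPS over D on the fragment L if it outputs a realizing program for every
  specification of L.\<close>
definition solves :: "real set \<Rightarrow> (spec \<Rightarrow> prog) \<Rightarrow> spec set \<Rightarrow> bool" where
  "solves D Alg L \<longleftrightarrow> (\<forall>\<phi> \<in> L. realizes D (Alg \<phi>) \<phi>)"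

definition fragment :: "spec set \<Rightarrow> bool" where
  "fragment L \<longleftrightarrow> (\<forall>\<phi> \<in> L. spec_wf \<phi>)"

end

theory Submission
  imports Defs "HOL-Computational_Algebra.Primes"
begin

lemma my_sqrt2_not_rat: "sqrt (real (2::nat)) \<notin> \<rat>"
proof
  let ?p = "2::nat"
  have pr: "prime ?p" by simp
  have p: "?p > 1" by simp
  assume "sqrt ?p \<in> \<rat>"
  then obtain m n :: nat
    where n: "n \<noteq> 0"
      and sqrt_rat: "\<bar>sqrt ?p\<bar> = m / n"
      and "coprime m n" by (rule Rats_abs_nat_div_natE)
  have eq: "m\<^sup>2 = ?p * n\<^sup>2"
  proof -
    from n and sqrt_rat have "m = \<bar>sqrt ?p\<bar> * n" by simp
    then have "m\<^sup>2 = (sqrt ?p)\<^sup>2 * n\<^sup>2" by (simp add: power_mult_distrib)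
    also have "(sqrt ?p)\<^sup>2 = ?p" by simp
    also have "\<dots> * n\<^sup>2 = ?p * n\<^sup>2" by simp
    finally show ?thesis by linarith
  qed
  have "?p dvd m \<and> ?p dvd n"
  proof
    from eq have "?p dvd m\<^sup>2" ..
    with pr show "?p dvd m" by (rule prime_dvd_power)
    then obtain k where "m = ?p * k" ..
    with eq have "?p * n\<^sup>2 = ?p\<^sup>2 * k\<^sup>2" by algebra
    with p have "n\<^sup>2 = ?p * k\<^sup>2" by (simp add: power2_eq_square)
    then have "?p dvd n\<^sup>2" ..
    with pr show "?p dvd n" by (rule prime_dvd_power)
  qed
  then have "?p dvd gcd m n" by simp
  with \<open>coprime m n\<close> have "?p = 1" by simp
  with p show False by simp
qed

lemma no_rat_sq2: "x \<in> \<rat> \<Longrightarrow> x * x \<noteq> (2::real)"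
proof
  assume x: "x \<in> \<rat>" and e: "x * x = 2"
  have "sqrt 2 = \<bar>x\<bar>" using e by (metis real_sqrt_abs power2_eq_square)
  moreover have "\<bar>x\<bar> \<in> \<rat>" using x by simp
  ultimately show False using my_sqrt2_not_rat by simp
qed

definition ratstate :: "state \<Rightarrow> bool" where
  "ratstate s \<longleftrightarrow> (\<forall>v. s v \<in> \<rat>)"

lemma peval_rat: "ratstate s \<Longrightarrow> peval s t \<in> \<rat>"
  by (induction t) (auto simp: ratstate_def)

definition ratout :: "outcome \<Rightarrow> bool" where
  "ratout out \<longleftrightarrow> (case out of Cont s \<Rightarrow> ratstate s
      | Ret None \<Rightarrow> True | Ret (Some B) \<Rightarrow> set B \<subseteq> \<rat>)"

lemma exec_rat: "exec P s out \<Longrightarrow> ratstate s \<Longrightarrow> ratout out"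
proof (induction rule: exec.induct)
  case (Assign v s t)
  then show ?case using peval_rat[OF Assign] by (auto simp: ratout_def ratstate_def)
next
  case (WhileT s c p s' out)
  then show ?case by (auto simp: ratout_def)
next
  case (SeqC p s s' q out)
  then show ?case by (auto simp: ratout_def)
qed (auto simp: ratout_def ratstate_def)

lemma lookup_rat: "set A \<subseteq> \<rat> \<Longrightarrow> lookup A i \<in> \<rat>"
  by (auto simp: lookup_def)

lemma init_rat: "set A \<subseteq> \<rat> \<Longrightarrow> ratstate (init_state A)"
  unfolding ratstate_def
proof
  fix v assume "set A \<subseteq> \<rat>" then show "init_state A v \<in> \<rat>"
    by (cases v) (auto simp: lookup_rat)
qed

lemma part1: "solves UNIV Alg L \<Longrightarrow> solves \<rat> Alg L"
  unfolding solves_def realizes_def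
proof (intro ballI allI impI)
  fix \<phi> and A :: "real list"
  assume H: "\<forall>\<phi>\<in>L. \<forall>A. length A = spec_nin \<phi> \<and> set A \<subseteq> UNIV \<longrightarrow>
           (\<exists>r. exec (Alg \<phi>) (init_state A) (Ret r) \<and>
                (r = None \<longrightarrow> (\<forall>B. length B = spec_nout \<phi> \<and> set B \<subseteq> UNIV \<longrightarrow> \<not> spec_holds \<phi> A B)) \<and>
                (\<forall>B. r = Some B \<longrightarrow> length B = spec_nout \<phi> \<and> set B \<subseteq> UNIV \<and> spec_holds \<phi> A B))"
    and p: "\<phi> \<in> L" and a: "length A = spec_nin \<phi> \<and> set A \<subseteq> \<rat>"
  from H p a obtain r where ex: "exec (Alg \<phi>) (init_state A) (Ret r)"
    and n: "r = None \<longrightarrow> (\<forall>B. length B = spec_nout \<phi> \<longrightarrow> \<not> spec_holds \<phi> A B)"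
    and s: "\<forall>B. r = Some B \<longrightarrow> length B = spec_nout \<phi> \<and> spec_holds \<phi> A B" by blast
  have ro: "ratout (Ret r)" using exec_rat[OF ex init_rat] a by auto
  show "\<exists>r. exec (Alg \<phi>) (init_state A) (Ret r) \<and>
             (r = None \<longrightarrow> (\<forall>B. length B = spec_nout \<phi> \<and> set B \<subseteq> \<rat> \<longrightarrow> \<not> spec_holds \<phi> A B)) \<and>
             (\<forall>B. r = Some B \<longrightarrow> length B = spec_nout \<phi> \<and> set B \<subseteq> \<rat> \<and> spec_holds \<phi> A B)"
    using ex n s ro by (auto simp: ratout_def)
qed

definition sq2 :: "svar fm" where
  "sq2 = (let t = PAdd (PMul (PVar (YV 0)) (PVar (YV 0))) (PConst (-2)) in FAnd (Atom t Le) (Atom t Ge))"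

lemma sq2_holds: "spec_holds (Spec 0 1 sq2) A B \<longleftrightarrow> lookup B 0 * lookup B 0 = 2"
  by (auto simp: sq2_def Let_def)

lemma part2: "\<exists>L. fragment L \<and> finite L \<and> \<not> (\<exists>Alg. solves UNIV Alg L)
              \<and> (\<exists>Alg. solves \<rat> Alg L)"
proof -
  let ?L = "{Spec 0 1 sq2}"
  have f1: "fragment ?L" by (auto simp: fragment_def sq2_def Let_def)
  have f2: "finite ?L" by simp
  have key: "\<forall>B. length B = 1 \<and> set B \<subseteq> \<rat> \<longrightarrow> \<not> spec_holds (Spec 0 1 sq2) A B" for A
  proof (intro allI impI)
    fix B :: "real list" assume "length B = 1 \<and> set B \<subseteq> \<rat>"
    then have "lookup B 0 \<in> \<rat>" by (auto simp: lookup_def)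
    then show "\<not> spec_holds (Spec 0 1 sq2) A B" using no_rat_sq2 sq2_holds by blast
  qed
  have "solves \<rat> (\<lambda>_. ReturnBot) ?L"
    unfolding solves_def realizes_def using key by (auto intro: exec.RetBot)
  note solQ = this
  have f3: "\<not> (\<exists>Alg. solves UNIV Alg ?L)"
  proof
    assume "\<exists>Alg. solves UNIV Alg ?L"
    then obtain Alg where "solves UNIV Alg ?L" by blast
    then have "realizes UNIV (Alg (Spec 0 1 sq2)) (Spec 0 1 sq2)" by (simp add: solves_def)
    then obtain r where ex: "exec (Alg (Spec 0 1 sq2)) (init_state []) (Ret r)"
      and n: "r = None \<longrightarrow> (\<forall>B. length B = 1 \<longrightarrow> \<not> spec_holds (Spec 0 1 sq2) [] B)"
      and s: "\<forall>B. r = Some B \<longrightarrow> length B = 1 \<and> spec_holds (Spec 0 1 sq2) [] B"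
      unfolding realizes_def by fastforce
    have ro: "ratout (Ret r)" using exec_rat[OF ex init_rat] by auto
    show False
    proof (cases r)
      case None
      have "lookup [sqrt 2] 0 * lookup [sqrt 2] 0 = 2" by (simp add: lookup_def)
      then show False using n None sq2_holds[of "[]" "[sqrt 2]"] by auto
    next
      case (Some B)
      then have "length B = 1" "lookup B 0 * lookup B 0 = 2" using s sq2_holds by auto
      moreover have "lookup B 0 \<in> \<rat>" using ro Some \<open>length B = 1\<close>
        by (auto simp: ratout_def lookup_def)
      ultimately show False using no_rat_sq2 by blast
    qed
  qed
  show ?thesis using f1 f2 f3 solQ by blast
qed

theorem mainTheorem1:
  shows "(\<forall>L Alg. fragment L \<longrightarrow> solves UNIV Alg L \<longrightarrow> solves \<rat> Alg L)
       \<and> (\<exists>L. fragment L \<and> finite L \<and> \<not> (\<exists>Alg. solves UNIV Alg L)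
              \<and> (\<exists>Alg. solves \<rat> Alg L))"
  using part1 part2 by blast

end
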